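(* Let $T>0$, $a,f\in C^1([0,T])$ with $a(t)\ge\alpha>0$ on $[0,T]$. For $0<\varepsilon\le1$ let $u_\varepsilon$ be the solution of $\varepsilon u_\varepsilon'+au_\varepsilon=f$ on $(0,T]$ with initial value $u_\varepsilon(0)$, where $|u_\varepsilon(0)|\le K$ with $K$ independent of $\varepsilon$. For each $N\ge1$ let $0=t_0<t_1<\dots<t_N=T$ be a (possibly non-uniform) mesh $\Omega^N$ with $h_j=t_j-t_{j-1}\le C_0N^{-1}$ for all $1\le j\le N$, where $C_0$ is independent of $N$. Let $U^N_\varepsilon=(U_j)_{j=0}^N$ be the solution of the fitted backward Euler scheme $$\varepsilon\sigma_j\frac{U_j-U_{j-1}}{h_j}+a_jU_j=f(t_j),\quad 1\le j\le N,\qquad U_0=u_\varepsilon(0),$$ where $a_j=a(t_j)$, $\rho_j=h_j/\varepsilon$ and $\sigma_j=\dfrac{a_j\rho_j}{e^{a_j\rho_j}-1}$. Then there is a constant $C$, independent of $\varepsilon$ and $N$, such that for all $N\ge1$ $$\sup_{0<\varepsilon\le1}\ \max_{0\le j\le N}|U_j-u_\varepsilon(t_j)|\le CN^{-1}.$$ *)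

theory Defs
  imports "HOL-Analysis.Analysis"
begin

definition C1_on_interval :: "real \<Rightarrow> real \<Rightarrow> (real \<Rightarrow> real) \<Rightarrow> bool" where
  "C1_on_interval lo hi g \<longleftrightarrow>
     (\<exists>g'. (\<forall>t\<in>{lo..hi}. (g has_real_derivative g' t) (at t within {lo..hi}))
           \<and> continuous_on {lo..hi} g')"

definition fitted_sigma :: "real \<Rightarrow> real \<Rightarrow> real \<Rightarrow> real" where
  "fitted_sigma eps aj hj = (let r = hj / eps in aj * r / (exp (aj * r) - 1))"

end

theory Submission
  imports Defs
begin

lemma scheme_solve:
  fixes \<epsilon> b h X Y F :: real
  assumes "\<epsilon> > 0" "b > 0" "h > 0"
    and "\<epsilon> * fitted_sigma \<epsilon> b h * (X - Y) / h + b * X = F"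
  shows "X = exp (- (b * h / \<epsilon>)) * Y + (1 - exp (- (b * h / \<epsilon>))) * (F / b)"
proof -
  define x where "x = b * h / \<epsilon>"
  have xpos: "x > 0" using assms by (simp add: x_def)
  define E where "E = exp x"
  have E1: "E > 1" using xpos by (simp add: E_def)
  have sig: "\<epsilon> * fitted_sigma \<epsilon> b h / h = b / (E - 1)"
    using assms E1 by (simp add: fitted_sigma_def Let_def E_def x_def field_simps)
  have em: "exp (- x) = 1 / E" by (simp add: E_def exp_minus field_simps)
  have "b / (E - 1) * (X - Y) + b * X = F"
    using assms(4) sig by (metis times_divide_eq_left mult.commute)
  hence "b * (X - Y) + (E - 1) * b * X = (E - 1) * F"
    using E1 by (simp add: field_simps)
  hence "E * X = Y + (E - 1) * (F / b)" using assms(2) by (simp add: field_simps)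
  hence "X = Y / E + (1 - 1/E) * (F / b)" using E1 assms(2) by (simp add: field_simps)
  thus ?thesis using em x_def by simp
qed

lemma step:
  fixes y :: "real \<Rightarrow> real" and l r \<epsilon> b c M :: real
  assumes lr: "l < r" and ep: "\<epsilon> > 0" and bp: "b > 0" and cont: "continuous_on {l..r} y"
    and der: "\<forall>t\<in>{l<..<r}. \<exists>D. (y has_real_derivative D) (at t) \<and> \<bar>\<epsilon> * D + b * y t - c\<bar> \<le> M"
  shows "\<bar>y r - exp (- (b * (r - l) / \<epsilon>)) * y l - (1 - exp (- (b * (r - l) / \<epsilon>))) * (c / b)\<bar>
           \<le> M / b * (1 - exp (- (b * (r - l) / \<epsilon>)))"
proof -
  define E where "E t = exp (b * (t - l) / \<epsilon>)" for t
  define w where "w t = E t * (y t - c / b) - (y l - c / b)" for t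
  define \<phi> where "\<phi> t = M / b * (E t - 1)" for t
  have dE: "(E has_real_derivative E t * (b / \<epsilon>)) (at t)" for t
    unfolding E_def using ep by (auto intro!: derivative_eq_intros)
  have contE: "continuous_on {l..r} E" unfolding E_def using ep by (intro continuous_intros) auto
  have key: "\<exists>D'. ((\<lambda>t. \<phi> t + s * w t) has_real_derivative D') (at t) \<and> D' \<ge> 0"
    if t: "l < t" "t < r" and s: "s = 1 \<or> s = -1" for t s
  proof -
    obtain D where hD: "(y has_real_derivative D) (at t)" and bd: "\<bar>\<epsilon> * D + b * y t - c\<bar> \<le> M"
      using der t by (meson greaterThanLessThan_iff)
    have "((\<lambda>t. \<phi> t + s * w t) has_real_derivative
            M / b * (E t * (b / \<epsilon>)) + s * (E t * (b / \<epsilon>) * (y t - c / b) + E t * D)) (at t)"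
      unfolding \<phi>_def w_def
      by (rule derivative_eq_intros dE hD refl)+ (simp add: algebra_simps)
    moreover have "M / b * (E t * (b / \<epsilon>)) + s * (E t * (b / \<epsilon>) * (y t - c / b) + E t * D)
        = E t / \<epsilon> * (M + s * (\<epsilon> * D + b * y t - c))"
      using ep bp by (simp add: field_simps)
    moreover have "M + s * (\<epsilon> * D + b * y t - c) \<ge> 0" using s bd by auto
    moreover have "E t > 0" by (simp add: E_def)
    ultimately show ?thesis using ep by (intro exI[of _ "E t / \<epsilon> * (M + s * (\<epsilon> * D + b * y t - c))"]) auto
  qed
  have contw: "continuous_on {l..r} (\<lambda>t. \<phi> t + s * w t)" for s
    unfolding \<phi>_def w_def using cont contE by (intro continuous_intros) auto
  have El: "E l = 1" by (simp add: E_def)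
  have k1: "\<And>t. l < t \<Longrightarrow> t < r \<Longrightarrow> \<exists>D'. ((\<lambda>t. \<phi> t + w t) has_real_derivative D') (at t) \<and> D' \<ge> 0"
    using key[where s=1] by simp
  have k2: "\<And>t. l < t \<Longrightarrow> t < r \<Longrightarrow> \<exists>D'. ((\<lambda>t. \<phi> t - w t) has_real_derivative D') (at t) \<and> D' \<ge> 0"
    using key[where s="-1"] by simp
  have c1: "continuous_on {l..r} (\<lambda>t. \<phi> t + w t)" using contw[of 1] by simp
  have c2: "continuous_on {l..r} (\<lambda>t. \<phi> t - w t)" using contw[of "-1"] by simp
  have p1: "\<phi> l + w l \<le> \<phi> r + w r"
    by (rule DERIV_nonneg_imp_increasing_open[OF less_imp_le[OF lr] _ c1]) (use k1 in auto)
  have p2: "\<phi> l - w l \<le> \<phi> r - w r"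
    by (rule DERIV_nonneg_imp_increasing_open[OF less_imp_le[OF lr] _ c2]) (use k2 in auto)
  have z: "\<phi> l = 0" "w l = 0" by (simp_all add: \<phi>_def w_def El)
  have wr: "\<bar>w r\<bar> \<le> \<phi> r" using p1 p2 z by auto
  define q where "q = exp (- (b * (r - l) / \<epsilon>))"
  have qE: "q * E r = 1" by (simp add: q_def E_def flip: exp_add)
  have qpos: "q > 0" by (simp add: q_def)
  have "q * w r = (q * E r) * (y r - c / b) - q * (y l - c / b)"
    unfolding w_def by (simp add: algebra_simps)
  also have "\<dots> = y r - q * y l - (1 - q) * (c / b)" using qE by (simp add: algebra_simps add_divide_distrib[symmetric])
  finally have "q * w r = y r - q * y l - (1 - q) * (c / b)" .
  moreover have "q * \<phi> r = M / b * (1 - q)"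
    unfolding \<phi>_def using qE by (simp add: algebra_simps add_divide_distrib[symmetric])
  moreover have "\<bar>q * w r\<bar> \<le> q * \<phi> r" using wr qpos by (simp add: abs_mult)
  ultimately show ?thesis by (simp add: q_def)
qed

lemma C1_lip:
  assumes "C1_on_interval lo hi g"
  shows "\<exists>L\<ge>0. \<forall>s\<in>{lo..hi}. \<forall>t\<in>{lo..hi}. \<bar>g s - g t\<bar> \<le> L * \<bar>s - t\<bar>"
proof -
  obtain g' where d: "\<forall>t\<in>{lo..hi}. (g has_real_derivative g' t) (at t within {lo..hi})"
    and c: "continuous_on {lo..hi} g'" using assms unfolding C1_on_interval_def by blast
  obtain L where L: "L \<ge> 0" "\<And>x. x \<in> {lo..hi} \<Longrightarrow> norm (g' x) \<le> L"
    using continuous_on_compact_bound[OF compact_Icc c] by blast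
  have "\<bar>g s - g t\<bar> \<le> L * \<bar>s - t\<bar>" if "s \<in> {lo..hi}" "t \<in> {lo..hi}" for s t
    using field_differentiable_bound[where S="{lo..hi}" and f=g and f'=g' and B=L, OF convex_real_interval(5) _ L(2) that] d by auto
  thus ?thesis using L(1) by blast
qed

lemma C1_bound:
  assumes "C1_on_interval lo hi g"
  shows "\<exists>M\<ge>0. \<forall>t\<in>{lo..hi}. \<bar>g t\<bar> \<le> M"
proof -
  obtain g' where d: "\<forall>t\<in>{lo..hi}. (g has_real_derivative g' t) (at t within {lo..hi})"
    using assms unfolding C1_on_interval_def by blast
  have "continuous_on {lo..hi} g"
    unfolding continuous_on_eq_continuous_within using d DERIV_continuous by blast
  then obtain M where "M \<ge> 0" "\<And>x. x \<in> {lo..hi} \<Longrightarrow> norm (g x) \<le> M"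
    using continuous_on_compact_bound[OF compact_Icc] by blast
  thus ?thesis by auto
qed

lemma maxp:
  fixes y :: "real \<Rightarrow> real" and T B :: real
  assumes T: "0 \<le> T" and cont: "continuous_on {0..T} y" and y0: "y 0 \<le> B"
    and der: "\<forall>t\<in>{0<..T}. y t > B \<longrightarrow> (\<exists>D<0. (y has_real_derivative D) (at t within {0..T}))"
  shows "\<forall>t\<in>{0..T}. y t \<le> B"
proof (rule ccontr)
  assume "\<not> ?thesis"
  then obtain t where t: "t \<in> {0..T}" "y t > B" by auto
  obtain m where m: "m \<in> {0..T}" "\<forall>s\<in>{0..T}. y s \<le> y m"
    using continuous_attains_sup[OF compact_Icc _ cont] T by auto
  have ym: "y m > B" using m t by force
  have mpos: "m > 0" using ym y0 m(1) by (cases "m = 0") auto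
  obtain D where D: "D < 0" "(y has_real_derivative D) (at m within {0..T})"
    using der ym mpos m(1) by auto
  obtain d where d: "d > 0" "\<forall>h>0. m - h \<in> {0..T} \<longrightarrow> h < d \<longrightarrow> y m < y (m - h)"
    using has_real_derivative_neg_dec_left[OF D(2) D(1)] by blast
  define h where "h = min (d/2) m"
  have "h > 0" "h < d" "m - h \<in> {0..T}" using d mpos m(1) by (auto simp: h_def)
  hence "y m < y (m - h)" using d by blast
  moreover have "y (m - h) \<le> y m" using m(2) \<open>m - h \<in> {0..T}\<close> by blast
  ultimately show False by linarith
qed

theorem theorem1:
  fixes T \<alpha> K C0 :: real
    and a f :: "real \<Rightarrow> real"
    and u :: "real \<Rightarrow> real \<Rightarrow> real"
    and mesh :: "nat \<Rightarrow> nat \<Rightarrow> real"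
    and U :: "real \<Rightarrow> nat \<Rightarrow> nat \<Rightarrow> real"
  assumes T_pos: "T > 0"
    and a_C1: "C1_on_interval 0 T a"
    and f_C1: "C1_on_interval 0 T f"
    and alpha_pos: "\<alpha> > 0"
    and a_ge: "\<forall>t\<in>{0..T}. a t \<ge> \<alpha>"
    and u_cont: "\<forall>\<epsilon>\<in>{0<..1}. continuous_on {0..T} (u \<epsilon>)"
    and u_ode: "\<forall>\<epsilon>\<in>{0<..1}. \<forall>t\<in>{0<..T}. \<exists>D.
                 (u \<epsilon> has_real_derivative D) (at t within {0..T})
                 \<and> \<epsilon> * D + a t * u \<epsilon> t = f t"
    and u_init: "\<forall>\<epsilon>\<in>{0<..1}. \<bar>u \<epsilon> 0\<bar> \<le> K"
    and mesh_start: "\<forall>N\<ge>1. mesh N 0 = 0"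
    and mesh_end: "\<forall>N\<ge>1. mesh N N = T"
    and mesh_incr: "\<forall>N\<ge>1. \<forall>j\<in>{1..N}. mesh N (j - 1) < mesh N j"
    and mesh_step: "\<forall>N\<ge>1. \<forall>j\<in>{1..N}. mesh N j - mesh N (j - 1) \<le> C0 / real N"
    and U_init: "\<forall>\<epsilon>\<in>{0<..1}. \<forall>N\<ge>1. U \<epsilon> N 0 = u \<epsilon> 0"
    and U_scheme: "\<forall>\<epsilon>\<in>{0<..1}. \<forall>N\<ge>1. \<forall>j\<in>{1..N}.
        (let h = mesh N j - mesh N (j - 1); aj = a (mesh N j) in
           \<epsilon> * fitted_sigma \<epsilon> aj h * (U \<epsilon> N j - U \<epsilon> N (j - 1)) / h
             + aj * U \<epsilon> N j = f (mesh N j))"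
  shows "\<exists>C. \<forall>N\<ge>1. \<forall>\<epsilon>\<in>{0<..1}. \<forall>j\<le>N.
           \<bar>U \<epsilon> N j - u \<epsilon> (mesh N j)\<bar> \<le> C / real N"
proof -
  obtain La where La: "La \<ge> 0" "\<forall>s\<in>{0..T}. \<forall>t\<in>{0..T}. \<bar>a s - a t\<bar> \<le> La * \<bar>s - t\<bar>"
    using C1_lip[OF a_C1] by blast
  obtain Lf where Lf: "Lf \<ge> 0" "\<forall>s\<in>{0..T}. \<forall>t\<in>{0..T}. \<bar>f s - f t\<bar> \<le> Lf * \<bar>s - t\<bar>"
    using C1_lip[OF f_C1] by blast
  obtain Mf where Mf: "Mf \<ge> 0" "\<forall>t\<in>{0..T}. \<bar>f t\<bar> \<le> Mf"
    using C1_bound[OF f_C1] by blast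
  have K0: "K \<ge> 0" using u_init by (metis abs_ge_zero greaterThanAtMost_iff order_trans zero_less_one order_refl)
  define B where "B = max K (Mf / \<alpha>)"
  have B0: "B \<ge> 0" using K0 by (simp add: B_def)
  have aB: "\<alpha> * B \<ge> Mf" using alpha_pos by (simp add: B_def field_simps max_def)
  have ubound: "\<bar>u \<epsilon> t\<bar> \<le> B" if e: "\<epsilon> \<in> {0<..1}" and t: "t \<in> {0..T}" for \<epsilon> t
  proof -
    have ep: "\<epsilon> > 0" using e by auto
    have cont: "continuous_on {0..T} (u \<epsilon>)" using u_cont e by blast
    have "\<bar>u \<epsilon> 0\<bar> \<le> K" using u_init e by blast
    hence u0: "\<bar>u \<epsilon> 0\<bar> \<le> B" by (simp add: B_def)
    have up: "\<forall>t\<in>{0..T}. u \<epsilon> t \<le> B"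
    proof (rule maxp)
      show "0 \<le> T" using T_pos by simp
      show "continuous_on {0..T} (u \<epsilon>)" by (rule cont)
      show "u \<epsilon> 0 \<le> B" using u0 by simp
      show "\<forall>t\<in>{0<..T}. u \<epsilon> t > B \<longrightarrow> (\<exists>D<0. (u \<epsilon> has_real_derivative D) (at t within {0..T}))"
      proof (intro ballI impI)
        fix t assume t: "t \<in> {0<..T}" and ut: "u \<epsilon> t > B"
        obtain D where D: "(u \<epsilon> has_real_derivative D) (at t within {0..T})" "\<epsilon> * D + a t * u \<epsilon> t = f t"
          using u_ode e t by blast
        have at: "a t \<ge> \<alpha>" using a_ge t by auto
        have upos: "u \<epsilon> t > 0" using ut B0 by linarith
        have "a t * u \<epsilon> t \<ge> \<alpha> * u \<epsilon> t" using at upos by (intro mult_right_mono) auto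
        moreover have "\<alpha> * u \<epsilon> t > \<alpha> * B" using alpha_pos ut by simp
        moreover have "f t \<le> Mf" using Mf(2) t by (metis abs_le_D1 greaterThanAtMost_iff atLeastAtMost_iff less_imp_le)
        ultimately have "\<epsilon> * D < 0" using D(2) aB by linarith
        hence "D < 0" using ep by (simp add: mult_less_0_iff)
        thus "\<exists>D<0. (u \<epsilon> has_real_derivative D) (at t within {0..T})" using D(1) by blast
      qed
    qed
    have low: "\<forall>t\<in>{0..T}. - u \<epsilon> t \<le> B"
    proof (rule maxp)
      show "0 \<le> T" using T_pos by simp
      show "continuous_on {0..T} (\<lambda>t. - u \<epsilon> t)" using cont by (intro continuous_intros)
      show "- u \<epsilon> 0 \<le> B" using u0 by simp
      show "\<forall>t\<in>{0<..T}. - u \<epsilon> t > B \<longrightarrow> (\<exists>D<0. ((\<lambda>t. - u \<epsilon> t) has_real_derivative D) (at t within {0..T}))"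
      proof (intro ballI impI)
        fix t assume t: "t \<in> {0<..T}" and ut: "- u \<epsilon> t > B"
        obtain D where D: "(u \<epsilon> has_real_derivative D) (at t within {0..T})" "\<epsilon> * D + a t * u \<epsilon> t = f t"
          using u_ode e t by blast
        have at: "a t \<ge> \<alpha>" using a_ge t by auto
        have uneg: "u \<epsilon> t < 0" using ut B0 by linarith
        have "a t * u \<epsilon> t \<le> \<alpha> * u \<epsilon> t" using at uneg by (intro mult_right_mono_neg) auto
        moreover have "\<alpha> * (- u \<epsilon> t) > \<alpha> * B" using alpha_pos ut by (intro mult_strict_left_mono)
        moreover have "- f t \<le> Mf" using Mf(2) t by (metis abs_le_D2 greaterThanAtMost_iff atLeastAtMost_iff less_imp_le)
        ultimately have "\<epsilon> * (- D) < 0" using D(2) aB by (simp add: algebra_simps)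
        hence "- D < 0" using ep by (simp add: zero_less_mult_iff)
        moreover have "((\<lambda>t. - u \<epsilon> t) has_real_derivative - D) (at t within {0..T})"
          using D(1) by (rule DERIV_minus)
        ultimately show "\<exists>D<0. ((\<lambda>t. - u \<epsilon> t) has_real_derivative D) (at t within {0..T})" by blast
      qed
    qed
    show ?thesis using up low t by force
  qed
  have C0T: "T \<le> C0" using mesh_step[rule_format, of 1 1] mesh_start[rule_format, of 1] mesh_end[rule_format, of 1] by simp
  have mono: "mesh N i \<le> mesh N (i + k)" if "N \<ge> 1" "i + k \<le> N" for N i k
    using that(2)
  proof (induction k)
    case 0 then show ?case by simp
  next
    case (Suc k)
    have "mesh N (i + Suc k - 1) < mesh N (i + Suc k)" using mesh_incr[rule_format, OF that(1), of "i + Suc k"] Suc.prems by auto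
    then show ?case using Suc by simp
  qed
  have inr: "mesh N j \<in> {0..T}" if "N \<ge> 1" "j \<le> N" for N j
    using mono[OF that(1), of 0 j] mono[OF that(1), of j "N - j"] that mesh_start[rule_format, OF that(1)] mesh_end[rule_format, OF that(1)] by simp
  define C where "C = (Lf + La * B) * C0 / \<alpha>"
  have C0': "C \<ge> 0" using La Lf B0 C0T T_pos alpha_pos by (simp add: C_def)
  show ?thesis
  proof (intro exI[of _ C] allI impI ballI)
    fix N :: nat and \<epsilon> :: real and j :: nat
    assume N: "N \<ge> 1" and e: "\<epsilon> \<in> {0<..1}" and jN: "j \<le> N"
    have ep: "\<epsilon> > 0" using e by auto
    show "\<bar>U \<epsilon> N j - u \<epsilon> (mesh N j)\<bar> \<le> C / real N"
      using jN
    proof (induction j)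
      case 0
      then show ?case using U_init e N mesh_start C0' by simp
    next
      case (Suc j)
      define l where "l = mesh N j"
      define r where "r = mesh N (Suc j)"
      have lr: "l < r" using mesh_incr[rule_format, OF N, of "Suc j"] Suc.prems by (simp add: l_def r_def)
      have l0: "l \<in> {0..T}" using inr N Suc.prems by (simp add: l_def)
      have r0: "r \<in> {0..T}" using inr N Suc.prems by (simp add: r_def)
      have hC: "r - l \<le> C0 / real N" using mesh_step[rule_format, OF N, of "Suc j"] Suc.prems by (simp add: l_def r_def)
      define b where "b = a r"
      have bA: "b \<ge> \<alpha>" using a_ge r0 by (simp add: b_def)
      have bpos: "b > 0" using bA alpha_pos by linarith
      define q where "q = exp (- (b * (r - l) / \<epsilon>))"
      have IH: "\<bar>U \<epsilon> N j - u \<epsilon> l\<bar> \<le> C / real N" using Suc by (simp add: l_def)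
      have sch: "\<epsilon> * fitted_sigma \<epsilon> b (r - l) * (U \<epsilon> N (Suc j) - U \<epsilon> N j) / (r - l) + b * U \<epsilon> N (Suc j) = f r"
        using U_scheme[rule_format, OF e N, of "Suc j"] Suc.prems by (simp add: Let_def l_def r_def b_def)
      have Us: "U \<epsilon> N (Suc j) = q * U \<epsilon> N j + (1 - q) * (f r / b)"
        using scheme_solve[OF ep bpos _ sch] lr by (simp add: q_def)
      define M where "M = (Lf + La * B) * (r - l)"
      have der: "\<forall>t\<in>{l<..<r}. \<exists>D. (u \<epsilon> has_real_derivative D) (at t) \<and> \<bar>\<epsilon> * D + b * u \<epsilon> t - f r\<bar> \<le> M"
      proof
        fix t assume t: "t \<in> {l<..<r}"
        have t0: "t \<in> {0<..<T}" using t l0 r0 by auto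
        obtain D where D: "(u \<epsilon> has_real_derivative D) (at t within {0..T})" "\<epsilon> * D + a t * u \<epsilon> t = f t"
          using u_ode e t0 by force
        have "(u \<epsilon> has_real_derivative D) (at t within {0<..<T})"
          by (rule DERIV_subset[OF D(1)]) auto
        hence dat: "(u \<epsilon> has_real_derivative D) (at t)" using at_within_open[of t "{0<..<T}"] t0 by auto
        have tT: "t \<in> {0..T}" using t0 by auto
        have e1: "\<epsilon> * D + b * u \<epsilon> t - f r = (f t - f r) + (a r - a t) * u \<epsilon> t"
          using D(2) by (simp add: b_def algebra_simps)
        have f1: "\<bar>f t - f r\<bar> \<le> Lf * (r - l)"
        proof -
          have "\<bar>f t - f r\<bar> \<le> Lf * \<bar>t - r\<bar>" using Lf(2) tT r0 by blast
          also have "\<dots> \<le> Lf * (r - l)" using t Lf(1) by (intro mult_left_mono) auto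
          finally show ?thesis .
        qed
        have a1: "\<bar>(a r - a t) * u \<epsilon> t\<bar> \<le> La * (r - l) * B"
        proof -
          have "\<bar>a r - a t\<bar> \<le> La * \<bar>r - t\<bar>" using La(2) tT r0 by blast
          also have "\<dots> \<le> La * (r - l)" using t La(1) by (intro mult_left_mono) auto
          finally have "\<bar>a r - a t\<bar> \<le> La * (r - l)" .
          moreover have "\<bar>u \<epsilon> t\<bar> \<le> B" using ubound e tT by blast
          ultimately show ?thesis unfolding abs_mult by (intro mult_mono) auto
        qed
        have "\<bar>\<epsilon> * D + b * u \<epsilon> t - f r\<bar> \<le> M"
          unfolding e1 M_def using f1 a1 by (simp add: algebra_simps)
        thus "\<exists>D. (u \<epsilon> has_real_derivative D) (at t) \<and> \<bar>\<epsilon> * D + b * u \<epsilon> t - f r\<bar> \<le> M"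
          using dat by blast
      qed
      have cont: "continuous_on {l..r} (u \<epsilon>)"
        by (rule continuous_on_subset[OF u_cont[rule_format, OF e]]) (use l0 r0 in auto)
      have st: "\<bar>u \<epsilon> r - q * u \<epsilon> l - (1 - q) * (f r / b)\<bar> \<le> M / b * (1 - q)"
        using step[OF lr ep bpos cont der] by (simp add: q_def)
      have q1: "q \<le> 1" "q > 0" using bpos lr ep by (auto simp: q_def)
      have M0: "M \<ge> 0" using La Lf B0 lr by (simp add: M_def)
      have "M / b \<le> M / \<alpha>" using M0 bA alpha_pos by (intro divide_left_mono) auto
      also have "M / \<alpha> \<le> (Lf + La * B) * (C0 / real N) / \<alpha>"
        unfolding M_def using hC La Lf B0 alpha_pos by (intro divide_right_mono mult_left_mono) auto
      also have "\<dots> = C / real N" by (simp add: C_def)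
      finally have Mb: "M / b \<le> C / real N" .
      have "U \<epsilon> N (Suc j) - u \<epsilon> r = q * (U \<epsilon> N j - u \<epsilon> l) - (u \<epsilon> r - q * u \<epsilon> l - (1 - q) * (f r / b))"
        using Us by (simp add: algebra_simps)
      hence "\<bar>U \<epsilon> N (Suc j) - u \<epsilon> r\<bar> \<le> \<bar>q * (U \<epsilon> N j - u \<epsilon> l)\<bar> + \<bar>u \<epsilon> r - q * u \<epsilon> l - (1 - q) * (f r / b)\<bar>"
        by (simp only: abs_triangle_ineq4)
      also have "\<dots> \<le> q * \<bar>U \<epsilon> N j - u \<epsilon> l\<bar> + M / b * (1 - q)"
        using st q1 by (simp add: abs_mult)
      also have "\<dots> \<le> q * (C / real N) + (C / real N) * (1 - q)"
        using IH Mb q1 by (intro add_mono mult_left_mono mult_right_mono) auto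
      also have "\<dots> = C / real N" by (simp add: algebra_simps add_divide_distrib[symmetric])
      finally show ?case by (simp add: r_def)
    qed
  qed
qed

end
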